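(* Let $\phi:Z\to[-\infty,+\infty]$ be proper and closed, and suppose Assumptions (A1) and (A2) hold for some $\lambda\in\mathbb R$. Let $\tau\in(0,1/\lambda^-)$ and $(x',y')\in D\phi$. Then $\phi^Y_\tau(x;y')>-\infty$ for every $x\in X$, and $\phi^X_\tau(y;x')<+\infty$ for every $y\in Y$.
   Context: $(X,\mathsf d_X)$, $(Y,\mathsf d_Y)$ complete metric spaces; $Z=X\times Y$. $D_X\phi=\{x:\phi(x,y)<+\infty\ \forall y\}$, $D_Y\phi=\{y:\phi(x,y)>-\infty\ \forall x\}$, $D\phi=D_X\phi\times D_Y\phi$; proper: $D\phi\ne\emptyset$; closed: for $x\in D_X\phi$, $y\mapsto\phi(x,y)$ upper semicontinuous, for $y\in D_Y\phi$, $x\mapsto\phi(x,y)$ lower semicontinuous. (A1): $\phi=+\infty$ on $(X\setminus D_X\phi)\times D_Y\phi$, $\phi=-\infty$ on $D_X\phi\times(Y\setminus D_Y\phi)$. $\lambda^-=\max\{-\lambda,0\}$, $1/\lambda^-:=+\infty$ if $\lambda^-=0$. $\Phi_\tau(x,y;x',y')=\phi(x',y')+\frac1{2\tau}(\mathsf d_X^2(x',x)-\mathsf d_Y^2(y',y))$. $f$ on $Z$ is $\mu$-convex-concave along curves $\gamma,\sigma$ if for all $t\in[0,1]$: $f(\gamma_t,y)\le(1-t)f(\gamma_0,y)+tf(\gamma_1,y)-\frac\mu2t(1-t)\mathsf d_X^2(\gamma_0,\gamma_1)$ for all $y$, and $f(x,\sigma_t)\ge(1-t)f(x,\sigma_0)+tf(x,\sigma_1)+\frac\mu2t(1-t)\mathsf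 d_Y^2(\sigma_0,\sigma_1)$ for all $x$. (A2) for $\lambda$: for every $(x,y)\in Z$, $(x_0,y_0),(x_1,y_1)\in D\phi$ there are continuous curves $\gamma$ from $x_0$ to $x_1$, $\sigma$ from $y_0$ to $y_1$ such that for all $\tau\in(0,1/\lambda^-)$, $(x',y')\mapsto\Phi_\tau(x,y;x',y')$ is $(\tau^{-1}+\lambda)$-convex-concave along them. $\phi^X_\tau(y;x')=\sup_{y'\in Y}\{\phi(x',y')-\frac1{2\tau}\mathsf d_Y^2(y',y)\}$, $\phi^Y_\tau(x;y')=\inf_{x''\in X}\{\phi(x'',y')+\frac1{2\tau}\mathsf d_X^2(x'',x)\}$. *)

theory Defs
  imports "HOL-Analysis.Analysis" "HOL-Library.Extended_Real"
begin

definition DX :: "('a \<Rightarrow> 'b \<Rightarrow> ereal) \<Rightarrow> 'a set" where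
  "DX \<phi> = {x. \<forall>y. \<phi> x y < \<infinity>}"

definition DY :: "('a \<Rightarrow> 'b \<Rightarrow> ereal) \<Rightarrow> 'b set" where
  "DY \<phi> = {y. \<forall>x. \<phi> x y > -\<infinity>}"

definition proper_fun :: "('a \<Rightarrow> 'b \<Rightarrow> ereal) \<Rightarrow> bool" where
  "proper_fun \<phi> \<longleftrightarrow> DX \<phi> \<times> DY \<phi> \<noteq> {}"

definition lsc_fun :: "('a::topological_space \<Rightarrow> ereal) \<Rightarrow> bool" where
  "lsc_fun f \<longleftrightarrow> (\<forall>c. open {x. c < f x})"

definition usc_fun :: "('a::topological_space \<Rightarrow> ereal) \<Rightarrow> bool" where
  "usc_fun f \<longleftrightarrow> (\<forall>c. open {x. f x < c})"

definition closed_fun :: "('a::topological_space \<Rightarrow> 'b::topological_space \<Rightarrow> ereal) \<Rightarrow> bool" where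
  "closed_fun \<phi> \<longleftrightarrow> (\<forall>x\<in>DX \<phi>. usc_fun (\<lambda>y. \<phi> x y)) \<and> (\<forall>y\<in>DY \<phi>. lsc_fun (\<lambda>x. \<phi> x y))"

definition A1 :: "('a \<Rightarrow> 'b \<Rightarrow> ereal) \<Rightarrow> bool" where
  "A1 \<phi> \<longleftrightarrow> (\<forall>x. x \<notin> DX \<phi> \<longrightarrow> (\<forall>y\<in>DY \<phi>. \<phi> x y = \<infinity>))
              \<and> (\<forall>x\<in>DX \<phi>. \<forall>y. y \<notin> DY \<phi> \<longrightarrow> \<phi> x y = -\<infinity>)"

definition lambda_minus :: "real \<Rightarrow> real" where
  "lambda_minus l = max (- l) 0"

(* \<tau> \<in> (0, 1/lam^-), with 1/lam^- = +\<infinity> when lam^- = 0 *)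
definition tau_adm :: "real \<Rightarrow> real \<Rightarrow> bool" where
  "tau_adm lam \<tau> \<longleftrightarrow> 0 < \<tau> \<and> (lambda_minus lam = 0 \<or> \<tau> < 1 / lambda_minus lam)"

definition Phi_tau :: "('a::metric_space \<Rightarrow> 'b::metric_space \<Rightarrow> ereal) \<Rightarrow> real \<Rightarrow> 'a \<Rightarrow> 'b \<Rightarrow> 'a \<Rightarrow> 'b \<Rightarrow> ereal" where
  "Phi_tau \<phi> \<tau> x y x' y' = \<phi> x' y' + ereal (((dist x' x)\<^sup>2 - (dist y' y)\<^sup>2) / (2 * \<tau>))"

definition cc_along :: "('a::metric_space \<Rightarrow> 'b::metric_space \<Rightarrow> ereal) \<Rightarrow> real \<Rightarrow> (real \<Rightarrow> 'a) \<Rightarrow> (real \<Rightarrow> 'b) \<Rightarrow> bool" where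
  "cc_along f \<mu> \<gamma> \<sigma> \<longleftrightarrow> (\<forall>t\<in>{0..1}.
      (\<forall>y. f (\<gamma> t) y \<le> ereal (1 - t) * f (\<gamma> 0) y + ereal t * f (\<gamma> 1) y
                         - ereal (\<mu> / 2 * t * (1 - t) * (dist (\<gamma> 0) (\<gamma> 1))\<^sup>2))
    \<and> (\<forall>x. f x (\<sigma> t) \<ge> ereal (1 - t) * f x (\<sigma> 0) + ereal t * f x (\<sigma> 1)
                         + ereal (\<mu> / 2 * t * (1 - t) * (dist (\<sigma> 0) (\<sigma> 1))\<^sup>2)))"

definition A2 :: "('a::metric_space \<Rightarrow> 'b::metric_space \<Rightarrow> ereal) \<Rightarrow> real \<Rightarrow> bool" where
  "A2 \<phi> lam \<longleftrightarrow> (\<forall>x y. \<forall>x0\<in>DX \<phi>. \<forall>y0\<in>DY \<phi>. \<forall>x1\<in>DX \<phi>. \<forall>y1\<in>DY \<phi>.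
      \<exists>\<gamma> \<sigma>. continuous_on {0..1} \<gamma> \<and> \<gamma> 0 = x0 \<and> \<gamma> 1 = x1
           \<and> continuous_on {0..1} \<sigma> \<and> \<sigma> 0 = y0 \<and> \<sigma> 1 = y1
           \<and> (\<forall>\<tau>. tau_adm lam \<tau> \<longrightarrow> cc_along (Phi_tau \<phi> \<tau> x y) (1 / \<tau> + lam) \<gamma> \<sigma>))"

definition phiX_tau :: "('a::metric_space \<Rightarrow> 'b::metric_space \<Rightarrow> ereal) \<Rightarrow> real \<Rightarrow> 'b \<Rightarrow> 'a \<Rightarrow> ereal" where
  "phiX_tau \<phi> \<tau> y x' = (SUP y'. \<phi> x' y' - ereal ((dist y' y)\<^sup>2 / (2 * \<tau>)))"

definition phiY_tau :: "('a::metric_space \<Rightarrow> 'b::metric_space \<Rightarrow> ereal) \<Rightarrow> real \<Rightarrow> 'a \<Rightarrow> 'b \<Rightarrow> ereal" where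
  "phiY_tau \<phi> \<tau> x y' = (INF x''. \<phi> x'' y' + ereal ((dist x'' x)\<^sup>2 / (2 * \<tau>)))"

end

theory Submission
  imports Defs
begin

lemma tau_adm_le: "tau_adm lam \<tau> \<Longrightarrow> 0 < \<tau>' \<Longrightarrow> \<tau>' \<le> \<tau> \<Longrightarrow> tau_adm lam \<tau>'"
  unfolding tau_adm_def by auto

lemma tau_adm_a: "tau_adm lam \<tau> \<Longrightarrow> lambda_minus lam * \<tau> < 1"
proof -
  assume h: "tau_adm lam \<tau>"
  have lm0: "lambda_minus lam \<ge> 0" unfolding lambda_minus_def by simp
  show ?thesis
  proof (cases "lambda_minus lam = 0")
    case True thus ?thesis by simp
  next
    case False
    hence p: "lambda_minus lam > 0" using lm0 by simp
    have "\<tau> < 1 / lambda_minus lam" using h False unfolding tau_adm_def by simp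
    thus ?thesis using p by (simp add: field_simps)
  qed
qed

lemma tau_adm_mu: "tau_adm lam \<tau> \<Longrightarrow> 0 < 1/\<tau> + lam"
proof -
  assume h: "tau_adm lam \<tau>"
  have t: "\<tau> > 0" using h unfolding tau_adm_def by simp
  have "lambda_minus lam * \<tau> < 1" using tau_adm_a[OF h] .
  hence "lambda_minus lam < 1/\<tau>" using t by (simp add: field_simps)
  moreover have "- lam \<le> lambda_minus lam" unfolding lambda_minus_def by simp
  ultimately show ?thesis by linarith
qed

lemma step1:
  fixes A T M \<tau> :: real
  assumes "0 < \<tau>" and H: "\<And>\<tau>'. 0 < \<tau>' \<Longrightarrow> \<tau>' \<le> \<tau> \<Longrightarrow> (A - T)/(2*\<tau>') \<le> M"
  shows "A \<le> T"
proof (rule ccontr)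
  assume "\<not> A \<le> T"
  hence p: "A - T > 0" by simp
  define \<tau>' where "\<tau>' = min \<tau> ((A-T)/(2*(\<bar>M\<bar>+1)))"
  have t0: "0 < \<tau>'" using p assms(1) unfolding \<tau>'_def by simp
  have t1: "\<tau>' \<le> (A-T)/(2*(\<bar>M\<bar>+1))" unfolding \<tau>'_def by simp
  hence "2*\<tau>' * (\<bar>M\<bar>+1) \<le> A - T" by (simp add: field_simps)
  hence "\<bar>M\<bar>+1 \<le> (A - T)/(2*\<tau>')" using t0 by (simp add: field_simps)
  moreover have "(A - T)/(2*\<tau>') \<le> M" using H t0 by (simp add: \<tau>'_def)
  ultimately show False by linarith
qed

lemma step2:
  fixes f0 f1 c r b t \<tau> lam :: real
  assumes b: "b \<ge> r" and r: "r > 0" and t: "t = r/(2*b)" and tau: "\<tau> > 0"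
  and ineq: "c \<le> (1-t)*f0 + t*(f1 + b^2/(2*\<tau>)) - (1/\<tau>+lam)/2*t*(1-t)*b^2"
  shows "f1 \<ge> f0 - (2*(f0-c)/r + r*(1/\<tau>+lam)/4) * b + lam*b^2/2"
proof -
  have bp: "b > 0" using b r by simp
  have tb: "t*b = r/2" using t bp by simp
  have tp: "t > 0" using t r bp by simp
  define \<mu> where "\<mu> = 1/\<tau> + lam"
  have i2: "t*f1 \<ge> c - (1-t)*f0 - t*b^2/(2*\<tau>) + \<mu>/2*t*(1-t)*b^2"
    using ineq unfolding \<mu>_def by (simp add: algebra_simps)
  have r1: "c - (1-t)*f0 - t*b^2/(2*\<tau>) + \<mu>/2*t*(1-t)*b^2
      = c - f0 + t*f0 + t*b^2/2*(\<mu> - 1/\<tau>) - \<mu>/2*(t*b)^2"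
    using tau by (simp add: field_simps power2_eq_square)
  also have "\<dots> = c - f0 + t*f0 + t*b^2*lam/2 - \<mu>*r^2/8"
    unfolding tb \<mu>_def by (simp add: algebra_simps power2_eq_square)
  finally have i3: "t*f1 \<ge> c - f0 + t*f0 + t*b^2*lam/2 - \<mu>*r^2/8" using i2 by linarith
  have "t * (f0 - (2*(f0-c)/r + r*\<mu>/4) * b + lam*b^2/2)
      = t*f0 - (2*(f0-c)/r + r*\<mu>/4) * (t*b) + t*b^2*lam/2"
    by (simp add: algebra_simps)
  also have "\<dots> = t*f0 - (f0-c) - \<mu>*r^2/8 + t*b^2*lam/2"
    unfolding tb using r by (simp add: field_simps power2_eq_square)
  finally have "t * (f0 - (2*(f0-c)/r + r*\<mu>/4) * b + lam*b^2/2) \<le> t*f1" using i3 by linarith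
  hence "f0 - (2*(f0-c)/r + r*\<mu>/4) * b + lam*b^2/2 \<le> f1" using tp
    by (simp add: mult_le_cancel_left_pos)
  thus ?thesis unfolding \<mu>_def .
qed

lemma step3:
  fixes c K lm b s e \<tau> fz :: real
  assumes fz: "fz \<ge> c - K*b - lm/2*b^2" and K: "K \<ge> 0" and lm: "lm \<ge> 0"
  and b: "0 \<le> b" "b \<le> s + e" and s: "0 \<le> s" and e: "0 \<le> e"
  and tau: "0 < \<tau>" "lm * \<tau> < 1"
  shows "fz + s^2/(2*\<tau>) \<ge> c - K*e - lm*e^2/2 - (K + lm*e)^2/(4*(1/(2*\<tau>) - lm/2))"
proof -
  define aa where "aa = 1/(2*\<tau>) - lm/2"
  define P where "P = K + lm*e"
  define X where "X = aa * s^2 - P * s"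
  have "lm < 1/\<tau>" using tau by (simp add: field_simps)
  hence a: "aa > 0" unfolding aa_def by simp
  have "K*b \<le> K*(s+e)" using K b by (simp add: mult_left_mono)
  moreover have "b^2 \<le> (s+e)^2" using b by (simp add: power_mono)
  hence "lm/2*b^2 \<le> lm/2*(s+e)^2" using lm by (simp add: mult_left_mono)
  ultimately have f2: "fz \<ge> c - K*(s+e) - lm/2*(s+e)^2" using fz by linarith
  have q: "s^2/(2*\<tau>) = aa * s^2 + lm/2 * s^2" unfolding aa_def by (simp add: algebra_simps)
  have "c - K*(s+e) - lm/2*(s+e)^2 + (aa * s^2 + lm/2 * s^2) = c - K*e - lm*e^2/2 + X"
    unfolding X_def P_def by (simp add: algebra_simps power2_eq_square)
  hence h1: "fz + s^2/(2*\<tau>) \<ge> c - K*e - lm*e^2/2 + X" using f2 q by linarith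
  have "0 \<le> (2*aa * s - P)^2" by simp
  also have "(2*aa * s - P)^2 = 4*aa*X + P^2" unfolding X_def by (simp add: algebra_simps power2_eq_square)
  finally have "-X*(4*aa) \<le> P^2" by (simp add: algebra_simps)
  hence "-X \<le> P^2/(4*aa)" using a by (simp add: le_divide_eq)
  hence "- (P^2/(4*aa)) \<le> X" by linarith
  with h1 show ?thesis unfolding aa_def P_def by linarith
qed

lemma core:
  fixes f :: "'a::metric_space \<Rightarrow> real" and S :: "'a set"
  assumes x0: "x0 \<in> S" and r: "r > 0" and cf: "c \<le> f x0"
  and loc: "\<And>w. w \<in> S \<Longrightarrow> dist w x0 < r \<Longrightarrow> c \<le> f w"
  and tau: "tau_adm lam \<tau>"
  and H: "\<And>z. z \<in> S \<Longrightarrow> \<exists>\<gamma>. \<gamma> 0 = x0 \<and> \<gamma> 1 = z \<and> (\<forall>t\<in>{0..1}. \<gamma> t \<in> S \<and>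
     (\<forall>\<tau>'. tau_adm lam \<tau>' \<longrightarrow> f (\<gamma> t) + (dist (\<gamma> t) x0)^2 / (2*\<tau>') \<le>
        (1-t) * f x0 + t * (f z + (dist z x0)^2/(2*\<tau>')) - (1/\<tau>'+lam)/2 * t * (1-t) * (dist x0 z)^2))"
  shows "\<exists>B. \<forall>z\<in>S. B \<le> f z + (dist z x)^2 / (2*\<tau>)"
proof -
  define K where "K = 2*(f x0 - c)/r + r*(1/\<tau>+lam)/4"
  define lm where "lm = lambda_minus lam"
  have taup: "\<tau> > 0" using tau unfolding tau_adm_def by simp
  have lm0: "lm \<ge> 0" unfolding lm_def lambda_minus_def by simp
  have lml: "- lam \<le> lm" unfolding lm_def lambda_minus_def by simp
  have K0: "K \<ge> 0" unfolding K_def using tau_adm_mu[OF tau] r cf by simp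
  have bound: "c - K * dist z x0 - lm/2 * (dist z x0)^2 \<le> f z" if z: "z \<in> S" for z
  proof -
    define b where "b = dist z x0"
    have b0: "b \<ge> 0" unfolding b_def by simp
    show ?thesis
    proof (cases "b < r")
      case True
      hence "c \<le> f z" using loc z unfolding b_def by simp
      moreover have "0 \<le> K * b" using K0 b0 by simp
      moreover have "0 \<le> lm/2 * b^2" using lm0 by simp
      ultimately show ?thesis unfolding b_def[symmetric] by linarith
    next
      case False
      hence br: "b \<ge> r" by simp
      hence bp: "b > 0" using r by simp
      obtain \<gamma> where g0: "\<gamma> 0 = x0" and g1: "\<gamma> 1 = z" and
        gH: "\<forall>t\<in>{0..1}. \<gamma> t \<in> S \<and>
     (\<forall>\<tau>'. tau_adm lam \<tau>' \<longrightarrow> f (\<gamma> t) + (dist (\<gamma> t) x0)^2 / (2*\<tau>') \<le>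
        (1-t) * f x0 + t * (f z + b^2/(2*\<tau>')) - (1/\<tau>'+lam)/2 * t * (1-t) * b^2)"
        using H[OF z] unfolding b_def by (auto simp: dist_commute)
      define t where "t = r/(2*b)"
      have tp: "t > 0" unfolding t_def using r bp by simp
      have tb: "t * b = r/2" unfolding t_def using bp by simp
      have t1: "t \<le> 1" unfolding t_def using br bp r by (simp add: field_simps)
      hence tI: "t \<in> {0..1}" using tp by simp
      have gS: "\<gamma> t \<in> S" using gH tI by blast
      have gI: "\<And>\<tau>'. tau_adm lam \<tau>' \<Longrightarrow> f (\<gamma> t) + (dist (\<gamma> t) x0)^2 / (2*\<tau>') \<le>
        (1-t) * f x0 + t * (f z + b^2/(2*\<tau>')) - (1/\<tau>'+lam)/2 * t * (1-t) * b^2"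
        using gH tI by blast
      define A where "A = (dist (\<gamma> t) x0)^2"
      define M where "M = (1-t) * f x0 + t * f z - lam/2 * t * (1-t) * b^2 - f (\<gamma> t)"
      have "A \<le> (t*b)^2"
      proof (rule step1[OF taup])
        fix \<tau>' :: real assume p: "0 < \<tau>'" "\<tau>' \<le> \<tau>"
        have ta: "tau_adm lam \<tau>'" using tau_adm_le[OF tau p] .
        have e: "(1-t) * f x0 + t * (f z + b^2/(2*\<tau>')) - (1/\<tau>'+lam)/2 * t * (1-t) * b^2
           = M + f (\<gamma> t) + (t*b)^2/(2*\<tau>')"
          unfolding M_def using p(1) by (simp add: field_simps power2_eq_square)
        have "(A - (t*b)^2)/(2*\<tau>') = A/(2*\<tau>') - (t*b)^2/(2*\<tau>')" by (simp add: diff_divide_distrib)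
        thus "(A - (t*b)^2)/(2*\<tau>') \<le> M" using gI[OF ta] e unfolding A_def by linarith
      qed
      hence "(dist (\<gamma> t) x0)^2 \<le> (t*b)^2" unfolding A_def .
      moreover have "0 \<le> t*b" using tp b0 by simp
      ultimately have "dist (\<gamma> t) x0 \<le> t*b" by (rule power2_le_imp_le)
      hence "dist (\<gamma> t) x0 < r" using tb r by simp
      hence cg: "c \<le> f (\<gamma> t)" using loc gS by simp
      have "0 \<le> (dist (\<gamma> t) x0)^2 / (2*\<tau>)" using taup by simp
      hence "c \<le> (1-t) * f x0 + t * (f z + b^2/(2*\<tau>)) - (1/\<tau>+lam)/2 * t * (1-t) * b^2"
        using gI[OF tau] cg by linarith
      from step2[OF br r t_def taup this]
      have "f x0 - K * b + lam*b^2/2 \<le> f z" unfolding K_def .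
      moreover have "- lm/2*b^2 \<le> lam*b^2/2"
      proof -
        have "0 \<le> (lam + lm) * b^2" using lml by simp
        moreover have "lam*b^2/2 - (- lm/2*b^2) = (lam + lm) * b^2 / 2" by (simp add: algebra_simps)
        ultimately show ?thesis by linarith
      qed
      ultimately show ?thesis unfolding b_def[symmetric] using cf by linarith
    qed
  qed
  define e where "e = dist x x0"
  define B where "B = c - K*e - lm*e^2/2 - (K + lm*e)^2/(4*(1/(2*\<tau>) - lm/2))"
  have "B \<le> f z + (dist z x)^2 / (2*\<tau>)" if z: "z \<in> S" for z
    unfolding B_def
  proof (rule step3[OF bound[OF z] K0 lm0])
    show "0 \<le> dist z x0" by simp
    show "dist z x0 \<le> dist z x + e" unfolding e_def by (rule dist_triangle)
    show "0 \<le> dist z x" by simp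
    show "0 \<le> e" unfolding e_def by simp
    show "0 < \<tau>" by (rule taup)
    show "lm * \<tau> < 1" unfolding lm_def by (rule tau_adm_a[OF tau])
  qed
  thus ?thesis by blast
qed

theorem mainTheorem8:
  fixes \<phi> :: "'a::complete_space \<Rightarrow> 'b::complete_space \<Rightarrow> ereal"
    and lam \<tau> :: real and x' :: 'a and y' :: 'b
  assumes "proper_fun \<phi>" and "closed_fun \<phi>"
    and "A1 \<phi>" and "A2 \<phi> lam"
    and "tau_adm lam \<tau>"
    and "x' \<in> DX \<phi>" and "y' \<in> DY \<phi>"
  shows "(\<forall>x. phiY_tau \<phi> \<tau> x y' > -\<infinity>) \<and> (\<forall>y. phiX_tau \<phi> \<tau> y x' < \<infinity>)"
proof
  note cl = assms(2) and a1 = assms(3) and a2 = assms(4) and tau = assms(5)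
    and xD = assms(6) and yD = assms(7)
  have taup: "\<tau> > 0" using tau unfolding tau_adm_def by simp
  show "\<forall>x. phiY_tau \<phi> \<tau> x y' > -\<infinity>"
  proof
    fix x
    define S where "S = {z. \<phi> z y' < \<infinity>}"
    define f where "f z = real_of_ereal (\<phi> z y')" for z
    have fin: "\<phi> z y' = ereal (f z)" if "z \<in> S" for z
    proof -
      have "\<phi> z y' > -\<infinity>" using yD unfolding DY_def by simp
      thus ?thesis using that unfolding S_def f_def by (cases "\<phi> z y'") auto
    qed
    have SD: "z \<in> DX \<phi>" if "z \<in> S" for z
      using that a1 yD unfolding S_def A1_def by force
    have x0: "x' \<in> S" using xD unfolding S_def DX_def by simp
    have "lsc_fun (\<lambda>z. \<phi> z y')" using cl yD unfolding closed_fun_def by blast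
    hence "open {z. ereal (f x' - 1) < \<phi> z y'}" unfolding lsc_fun_def by blast
    moreover have "x' \<in> {z. ereal (f x' - 1) < \<phi> z y'}" using fin[OF x0] by simp
    ultimately obtain r where r: "r > 0" and rb: "\<And>w. dist w x' < r \<Longrightarrow> ereal (f x' - 1) < \<phi> w y'"
      unfolding open_dist by blast
    have loc: "f x' - 1 \<le> f w" if "w \<in> S" "dist w x' < r" for w
      using rb[OF that(2)] fin[OF that(1)] by simp
    have H: "\<exists>\<gamma>. \<gamma> 0 = x' \<and> \<gamma> 1 = z \<and> (\<forall>t\<in>{0..1}. \<gamma> t \<in> S \<and>
     (\<forall>\<tau>'. tau_adm lam \<tau>' \<longrightarrow> f (\<gamma> t) + (dist (\<gamma> t) x')^2 / (2*\<tau>') \<le>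
        (1-t) * f x' + t * (f z + (dist z x')^2/(2*\<tau>')) - (1/\<tau>'+lam)/2 * t * (1-t) * (dist x' z)^2))"
      if z: "z \<in> S" for z
    proof -
      obtain \<gamma> \<sigma> where g0: "\<gamma> 0 = x'" and g1: "\<gamma> 1 = z"
        and cc: "\<And>\<tau>'. tau_adm lam \<tau>' \<Longrightarrow> cc_along (Phi_tau \<phi> \<tau>' x' y') (1 / \<tau>' + lam) \<gamma> \<sigma>"
        using a2 xD yD SD[OF z] unfolding A2_def by blast
      have "\<gamma> t \<in> S \<and>
     (\<forall>\<tau>'. tau_adm lam \<tau>' \<longrightarrow> f (\<gamma> t) + (dist (\<gamma> t) x')^2 / (2*\<tau>') \<le>
        (1-t) * f x' + t * (f z + (dist z x')^2/(2*\<tau>')) - (1/\<tau>'+lam)/2 * t * (1-t) * (dist x' z)^2)"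
        if t: "t \<in> {0..1}" for t
      proof -
        have ineq: "\<phi> (\<gamma> t) y' + ereal ((dist (\<gamma> t) x')^2 / (2*\<tau>'))
           \<le> ereal ((1-t) * f x' + t * (f z + (dist z x')^2/(2*\<tau>')) - (1/\<tau>'+lam)/2 * t * (1-t) * (dist x' z)^2)"
          if ta: "tau_adm lam \<tau>'" for \<tau>'
        proof -
          have "Phi_tau \<phi> \<tau>' x' y' (\<gamma> t) y' \<le> ereal (1 - t) * Phi_tau \<phi> \<tau>' x' y' (\<gamma> 0) y'
             + ereal t * Phi_tau \<phi> \<tau>' x' y' (\<gamma> 1) y'
             - ereal ((1 / \<tau>' + lam) / 2 * t * (1 - t) * (dist (\<gamma> 0) (\<gamma> 1))\<^sup>2)"
            using cc[OF ta] t unfolding cc_along_def by blast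
          thus ?thesis unfolding Phi_tau_def g0 g1 fin[OF x0] fin[OF z] by simp
        qed
        have "\<phi> (\<gamma> t) y' \<noteq> \<infinity>"
        proof
          assume "\<phi> (\<gamma> t) y' = \<infinity>"
          thus False using ineq[OF tau] by simp
        qed
        hence gS: "\<gamma> t \<in> S" unfolding S_def by (simp add: less_top)
        show ?thesis using gS ineq unfolding fin[OF gS] by simp
      qed
      thus ?thesis using g0 g1 by blast
    qed
    obtain B where B: "\<forall>z\<in>S. B \<le> f z + (dist z x)^2 / (2*\<tau>)"
      using core[OF x0 r _ loc tau H, of x] by auto
    have "ereal B \<le> phiY_tau \<phi> \<tau> x y'"
      unfolding phiY_tau_def
    proof (rule INF_greatest)
      fix z assume "z \<in> (UNIV :: 'a set)"
      show "ereal B \<le> \<phi> z y' + ereal ((dist z x)\<^sup>2 / (2 * \<tau>))"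
      proof (cases "z \<in> S")
        case True thus ?thesis using B unfolding fin[OF True] by simp
      next
        case False hence "\<phi> z y' = \<infinity>" unfolding S_def by (simp add: less_top)
        thus ?thesis by simp
      qed
    qed
    thus "phiY_tau \<phi> \<tau> x y' > -\<infinity>" using less_le_trans[of "-\<infinity>" "ereal B"] by simp
  qed
next
  note cl = assms(2) and a1 = assms(3) and a2 = assms(4) and tau = assms(5)
    and xD = assms(6) and yD = assms(7)
  have taup: "\<tau> > 0" using tau unfolding tau_adm_def by simp
  show "\<forall>y. phiX_tau \<phi> \<tau> y x' < \<infinity>"
  proof
    fix y
    define S where "S = {w. \<phi> x' w > -\<infinity>}"
    define f where "f w = - real_of_ereal (\<phi> x' w)" for w
    have fin: "\<phi> x' w = ereal (- f w)" if "w \<in> S" for w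
    proof -
      have "\<phi> x' w < \<infinity>" using xD unfolding DX_def by simp
      thus ?thesis using that unfolding S_def f_def by (cases "\<phi> x' w") auto
    qed
    have SD: "w \<in> DY \<phi>" if "w \<in> S" for w
      using that a1 xD unfolding S_def A1_def by force
    have x0: "y' \<in> S" using yD unfolding S_def DY_def by simp
    have "usc_fun (\<lambda>w. \<phi> x' w)" using cl xD unfolding closed_fun_def by blast
    hence "open {w. \<phi> x' w < ereal (- f y' + 1)}" unfolding usc_fun_def by blast
    moreover have "y' \<in> {w. \<phi> x' w < ereal (- f y' + 1)}" using fin[OF x0] by simp
    ultimately obtain r where r: "r > 0" and rb: "\<And>w. dist w y' < r \<Longrightarrow> \<phi> x' w < ereal (- f y' + 1)"
      unfolding open_dist by blast
    have loc: "f y' - 1 \<le> f w" if "w \<in> S" "dist w y' < r" for w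
      using rb[OF that(2)] fin[OF that(1)] by simp
    have H: "\<exists>\<sigma>. \<sigma> 0 = y' \<and> \<sigma> 1 = z \<and> (\<forall>t\<in>{0..1}. \<sigma> t \<in> S \<and>
     (\<forall>\<tau>'. tau_adm lam \<tau>' \<longrightarrow> f (\<sigma> t) + (dist (\<sigma> t) y')^2 / (2*\<tau>') \<le>
        (1-t) * f y' + t * (f z + (dist z y')^2/(2*\<tau>')) - (1/\<tau>'+lam)/2 * t * (1-t) * (dist y' z)^2))"
      if z: "z \<in> S" for z
    proof -
      obtain \<gamma> \<sigma> where g0: "\<sigma> 0 = y'" and g1: "\<sigma> 1 = z"
        and cc: "\<And>\<tau>'. tau_adm lam \<tau>' \<Longrightarrow> cc_along (Phi_tau \<phi> \<tau>' x' y') (1 / \<tau>' + lam) \<gamma> \<sigma>"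
        using a2 xD yD SD[OF z] unfolding A2_def by blast
      have "\<sigma> t \<in> S \<and>
     (\<forall>\<tau>'. tau_adm lam \<tau>' \<longrightarrow> f (\<sigma> t) + (dist (\<sigma> t) y')^2 / (2*\<tau>') \<le>
        (1-t) * f y' + t * (f z + (dist z y')^2/(2*\<tau>')) - (1/\<tau>'+lam)/2 * t * (1-t) * (dist y' z)^2)"
        if t: "t \<in> {0..1}" for t
      proof -
        have ineq: "ereal (- ((1-t) * f y' + t * (f z + (dist z y')^2/(2*\<tau>')) - (1/\<tau>'+lam)/2 * t * (1-t) * (dist y' z)^2))
           \<le> \<phi> x' (\<sigma> t) + ereal (- ((dist (\<sigma> t) y')^2 / (2*\<tau>')))"
          if ta: "tau_adm lam \<tau>'" for \<tau>'
        proof -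
          have "ereal (1 - t) * Phi_tau \<phi> \<tau>' x' y' x' (\<sigma> 0)
             + ereal t * Phi_tau \<phi> \<tau>' x' y' x' (\<sigma> 1)
             + ereal ((1 / \<tau>' + lam) / 2 * t * (1 - t) * (dist (\<sigma> 0) (\<sigma> 1))\<^sup>2)
             \<le> Phi_tau \<phi> \<tau>' x' y' x' (\<sigma> t)"
            using cc[OF ta] t unfolding cc_along_def by blast
          thus ?thesis unfolding Phi_tau_def g0 g1 fin[OF x0] fin[OF z]
            by (simp add: algebra_simps)
        qed
        have "\<phi> x' (\<sigma> t) \<noteq> -\<infinity>"
        proof
          assume "\<phi> x' (\<sigma> t) = -\<infinity>"
          thus False using ineq[OF tau] by simp
        qed
        hence gS: "\<sigma> t \<in> S" unfolding S_def by (simp add: bot_less)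
        show ?thesis using gS ineq unfolding fin[OF gS] by (simp add: algebra_simps)
      qed
      thus ?thesis using g0 g1 by blast
    qed
    obtain B where B: "\<forall>z\<in>S. B \<le> f z + (dist z y)^2 / (2*\<tau>)"
      using core[OF x0 r _ loc tau H, of y] by auto
    have "phiX_tau \<phi> \<tau> y x' \<le> ereal (- B)"
      unfolding phiX_tau_def
    proof (rule SUP_least)
      fix z assume "z \<in> (UNIV :: 'b set)"
      show "\<phi> x' z - ereal ((dist z y)\<^sup>2 / (2 * \<tau>)) \<le> ereal (- B)"
      proof (cases "z \<in> S")
        case True
        have "B \<le> f z + (dist z y)^2 / (2*\<tau>)" using B True by blast
        thus ?thesis unfolding fin[OF True] by simp
      next
        case False hence "\<phi> x' z = -\<infinity>" unfolding S_def by (simp add: bot_less)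
        thus ?thesis by simp
      qed
    qed
    thus "phiX_tau \<phi> \<tau> y x' < \<infinity>" using le_less_trans[of _ "ereal (- B)" "\<infinity>"] by simp
  qed
qed

end
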